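(* Let $n,m\ge 1$ and let $(\mathbf R,s),(\mathbf R',s'):n\to m$ be 1-morphisms of $\mathbf{2Mat}_{\mathbb C}$. Then: (i) $(\mathbf R,s)$ is invertible if and only if $n=m$ and $\mathbf R$ is a permutation matrix; (ii) $(\mathbf R,s)$ and $(\mathbf R',s')$ are 2-isomorphic if and only if $\mathbf R=\mathbf R'$, and a 2-morphism $\mathsf T:(\mathbf R,s)\Rightarrow(\mathbf R,s')$ is invertible if and only if all its nonempty entries are nonsingular matrices; (iii) $(\mathbf R,s)$ is an equivalence if and only if it is invertible.
   Context: $\mathbf{2Mat}_{\mathbb C}$ is the following 2-category. Objects: integers $n\ge0$. For $n,m\ge1$ a 1-morphism $n\to m$ is a pair $(\mathbf R,s)$ with $\mathbf R=(R_{ij})$ an $m\times n$ matrix of natural numbers (rank matrix) and $s=(s_1,\dots,s_m)$ a gauge: for each $\mathbf a\in\mathbb N^n$ and $i$, $s_i(\mathbf a)\in GL((\mathbf R\mathbf a)_i,\mathbb C)$ (with $s_i(\mathbf a)=1$ if $(\mathbf R\mathbf a)_i=0$), normalized by $s_i(\mathbf e_j)=\mathbf I_{R_{ij}}$ ($\mathbf e_j$ the standard basis vectors). If $n=0$ or $m=0$ there is a unique 1-morphism $n\to m$ with only its identity 2-morphism. A 2-morphism $\mathsf T:(\mathbf R,s)\Rightarrow(\mathbf R',s')$ is an $m\times n$ array whose $(i,j)$ entry $\mathsf T_{ij}$ is a complex $R'_{ij}\times R_{ij}$ matrix if $R_{ij},R'_{ij}\neq0$ and is empty otherwise. Vertical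 composition is entrywise matrix product, $(\mathsf T'\cdot\mathsf T)_{ij}=\mathsf T'_{ij}\mathsf T_{ij}$ (with empty or zero matrices as appropriate). The composite of $(\mathbf R,s):n\to m$ and $(\tilde{\mathbf R},\tilde s):m\to p$ is $(\tilde{\mathbf R}\mathbf R,\tilde s\ast s)$ with $(\tilde s\ast s)_k(\mathbf a)=\tilde s_k(\mathbf R\mathbf a)\big(\bigoplus_{i}\mathbf I_{\tilde R_{ki}}\otimes s_i(\mathbf a)\big)\mathbf P(\tilde{\mathbf R}_k,\mathbf R,\mathbf a)\big(\bigoplus_j \tilde s_k(\mathbf R\mathbf e_j)^{-1}\otimes\mathbf I_{a_j}\big)$, where $\otimes$ is the Kronecker product, $\tilde{\mathbf R}_k$ is the $k$-th row of $\tilde{\mathbf R}$ and $\mathbf P(\tilde{\mathbf R}_k,\mathbf R,\mathbf a)$ is a fixed permutation matrix of order $\sum_{i,j}\tilde R_{ki}R_{ij}a_j$ (part of the construction of $\mathbf{2Mat}_{\mathbb C}$) which is the identity whenever $\tilde{\mathbf R}_k$ is a standard basis vector, $\mathbf a$ is a standard basis vector, $\mathbf R$ is an identity matrix, or $\mathbf R$ has a single column. Horizontal composition of $\mathsf T:(\mathbf R,s)\Rightarrow(\mathbf R',s'):n\to m$ and $\tilde{\mathsf T}:(\tilde{\mathbf R},\tilde s)\Rightarrow(\tilde{\mathbf R}',\tilde s'):m\to p$ is $(\tilde{\mathsf T}\circ\mathsf T)_{kj}=\tilde s'_k(\mathbf R'\mathbf e_j)\big(\bigoplus_i\tilde{\mathsf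 T}_{ki}\otimes\mathsf T_{ij}\big)\tilde s_k(\mathbf R\mathbf e_j)^{-1}$. The identity of $n$ is $(\mathbf I_n,\mathbf I)$ with $\mathbf I$ the trivial gauge (all $s_i(\mathbf a)$ identity matrices), and identity 2-morphisms have identity matrices as nonempty entries. A 1-morphism is an equivalence if it is invertible up to invertible 2-morphisms. *)

theory Defs
  imports "HOL-Combinatorics.Permutations" "Jordan_Normal_Form.Matrix"
begin

definition minv :: "complex mat \<Rightarrow> complex mat" where
  "minv A = (SOME B. B \<in> carrier_mat (dim_row A) (dim_row A) \<and> inverts_mat A B \<and> inverts_mat B A)"

definition kron :: "'a::semiring_0 mat \<Rightarrow> 'a mat \<Rightarrow> 'a mat" where
  "kron A B = mat (dim_row A * dim_row B) (dim_col A * dim_col B)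
     (\<lambda>(i,j). A $$ (i div dim_row B, j div dim_col B) * B $$ (i mod dim_row B, j mod dim_col B))"

definition dsum :: "'a::zero mat \<Rightarrow> 'a mat \<Rightarrow> 'a mat" where
  "dsum A B = four_block_mat A (0\<^sub>m (dim_row A) (dim_col B)) (0\<^sub>m (dim_row B) (dim_col A)) B"

definition dsum_list :: "'a::zero mat list \<Rightarrow> 'a mat" where
  "dsum_list Ms = foldr dsum Ms (0\<^sub>m 0 0)"

definition perm_mat :: "nat \<Rightarrow> 'a::{zero,one} mat \<Rightarrow> bool" where
  "perm_mat n A \<longleftrightarrow> (\<exists>p. p permutes {..<n} \<and>
      A = mat n n (\<lambda>(i,j). if j = p i then 1 else 0))"

text \<open>A 1-morphism n \<rightarrow> m is a pair (R, s): R an m \<times> n natural-number matrix and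
  s a gauge, s i a for i < m and a \<in> N^n (a nat vector of dimension n).\<close>
type_synonym mor1 = "nat mat \<times> (nat \<Rightarrow> nat vec \<Rightarrow> complex mat)"

definition is_1mor :: "nat \<Rightarrow> nat \<Rightarrow> mor1 \<Rightarrow> bool" where
  "is_1mor n m f \<longleftrightarrow> (case f of (R, s) \<Rightarrow>
     R \<in> carrier_mat m n \<and>
     (\<forall>i<m. \<forall>a\<in>carrier_vec n.
        s i a \<in> carrier_mat ((R *\<^sub>v a) $ i) ((R *\<^sub>v a) $ i) \<and> invertible_mat (s i a)) \<and>
     (\<forall>i<m. \<forall>j<n. s i (unit_vec n j) = 1\<^sub>m (R $$ (i,j))))"

text \<open>Equality of 1-morphisms n \<rightarrow> m (the gauge only matters on its domain).\<close>
definition mor_eq :: "nat \<Rightarrow> nat \<Rightarrow> mor1 \<Rightarrow> mor1 \<Rightarrow> bool" where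
  "mor_eq n m f g \<longleftrightarrow> fst f = fst g \<and>
     (\<forall>i<m. \<forall>a\<in>carrier_vec n. snd f i a = snd g i a)"

text \<open>Admissible families of permutation matrices P(r, R, a), where r is a row
  (of the outer rank matrix), R the inner rank matrix, a \<in> N^n.\<close>
definition admissible_P :: "(nat vec \<Rightarrow> nat mat \<Rightarrow> nat vec \<Rightarrow> complex mat) \<Rightarrow> bool" where
  "admissible_P P \<longleftrightarrow>
    (\<forall>m n r R a. r \<in> carrier_vec m \<longrightarrow> R \<in> carrier_mat m n \<longrightarrow> a \<in> carrier_vec n \<longrightarrow>
      (let N = (\<Sum>i<m. \<Sum>j<n. r $ i * R $$ (i,j) * a $ j) in
        perm_mat N (P r R a) \<and>
        ((\<exists>i<m. r = unit_vec m i) \<or> (\<exists>j<n. a = unit_vec n j) \<or> R = 1\<^sub>m n \<or> n = 1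
           \<longrightarrow> P r R a = 1\<^sub>m N)))"

definition comp1 :: "(nat vec \<Rightarrow> nat mat \<Rightarrow> nat vec \<Rightarrow> complex mat) \<Rightarrow> mor1 \<Rightarrow> mor1 \<Rightarrow> mor1" where
  "comp1 P g f = (case g of (Rt, st) \<Rightarrow> case f of (R, s) \<Rightarrow>
     (Rt * R,
      \<lambda>k a. st k (R *\<^sub>v a)
        * dsum_list (map (\<lambda>i. kron (1\<^sub>m (Rt $$ (k,i))) (s i a)) [0..<dim_row R])
        * P (row Rt k) R a
        * dsum_list (map (\<lambda>j. kron (minv (st k (R *\<^sub>v unit_vec (dim_col R) j))) (1\<^sub>m (a $ j)))
                       [0..<dim_col R])))"

definition id1 :: "nat \<Rightarrow> mor1" where
  "id1 n = (1\<^sub>m n, \<lambda>i a. 1\<^sub>m (a $ i))"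

definition invertible_1mor :: "(nat vec \<Rightarrow> nat mat \<Rightarrow> nat vec \<Rightarrow> complex mat) \<Rightarrow> nat \<Rightarrow> nat \<Rightarrow> mor1 \<Rightarrow> bool" where
  "invertible_1mor P n m f \<longleftrightarrow> (\<exists>g. is_1mor m n g \<and>
     mor_eq n n (comp1 P g f) (id1 n) \<and> mor_eq m m (comp1 P f g) (id1 m))"

text \<open>2-morphisms f \<Rightarrow> f' between 1-morphisms n \<rightarrow> m: arrays of
  R'_ij \<times> R_ij complex matrices (empty if a dimension is 0).\<close>
type_synonym mor2 = "nat \<Rightarrow> nat \<Rightarrow> complex mat"

definition is_2mor :: "nat \<Rightarrow> nat \<Rightarrow> mor1 \<Rightarrow> mor1 \<Rightarrow> mor2 \<Rightarrow> bool" where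
  "is_2mor n m f f' T \<longleftrightarrow>
     (\<forall>i<m. \<forall>j<n. T i j \<in> carrier_mat (fst f' $$ (i,j)) (fst f $$ (i,j)))"

definition vcomp :: "mor2 \<Rightarrow> mor2 \<Rightarrow> mor2" where
  "vcomp T' T = (\<lambda>i j. T' i j * T i j)"

definition id2 :: "mor1 \<Rightarrow> mor2" where
  "id2 f = (\<lambda>i j. 1\<^sub>m (fst f $$ (i,j)))"

definition invertible_2mor :: "nat \<Rightarrow> nat \<Rightarrow> mor1 \<Rightarrow> mor1 \<Rightarrow> mor2 \<Rightarrow> bool" where
  "invertible_2mor n m f f' T \<longleftrightarrow> is_2mor n m f f' T \<and>
     (\<exists>T'. is_2mor n m f' f T' \<and>
        (\<forall>i<m. \<forall>j<n. vcomp T' T i j = id2 f i j \<and> vcomp T T' i j = id2 f' i j))"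

definition iso2 :: "nat \<Rightarrow> nat \<Rightarrow> mor1 \<Rightarrow> mor1 \<Rightarrow> bool" where
  "iso2 n m f f' \<longleftrightarrow> (\<exists>T. invertible_2mor n m f f' T)"

definition equivalence_1mor :: "(nat vec \<Rightarrow> nat mat \<Rightarrow> nat vec \<Rightarrow> complex mat) \<Rightarrow> nat \<Rightarrow> nat \<Rightarrow> mor1 \<Rightarrow> bool" where
  "equivalence_1mor P n m f \<longleftrightarrow> (\<exists>g. is_1mor m n g \<and>
     iso2 n n (comp1 P g f) (id1 n) \<and> iso2 m m (comp1 P f g) (id1 m))"

end

theory Submission
  imports Defs
begin


definition mtr :: "complex mat \<Rightarrow> complex" where
  "mtr A = (\<Sum>i<dim_row A. A $$ (i,i))"

lemma mtr_comm:
  assumes "A \<in> carrier_mat a b" "B \<in> carrier_mat b a"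
  shows "mtr (A * B) = mtr (B * A)"
proof -
  have "mtr (A * B) = (\<Sum>i<a. \<Sum>k<b. A $$ (i,k) * B $$ (k,i))"
    using assms by (simp add: mtr_def scalar_prod_def row_def col_def atLeast0LessThan)
  also have "\<dots> = (\<Sum>k<b. \<Sum>i<a. B $$ (k,i) * A $$ (i,k))"
    by (subst sum.swap) (simp add: mult.commute)
  also have "\<dots> = mtr (B * A)"
    using assms by (simp add: mtr_def scalar_prod_def row_def col_def atLeast0LessThan)
  finally show ?thesis .
qed

lemma mtr_one: "mtr (1\<^sub>m k) = of_nat k"
  by (simp add: mtr_def)

lemma inv_dims_eq:
  assumes "A \<in> carrier_mat a b" "B \<in> carrier_mat b a" "A * B = 1\<^sub>m a" "B * A = (1\<^sub>m b :: complex mat)"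
  shows "a = b"
proof -
  have "(of_nat a :: complex) = of_nat b"
    using mtr_comm[OF assms(1,2)] assms(3,4) by (simp add: mtr_one)
  then show ?thesis by simp
qed

lemma iso2_iff:
  "iso2 n m f f' \<longleftrightarrow> (\<forall>i<m. \<forall>j<n. fst f $$ (i,j) = fst f' $$ (i,j))"
proof
  assume "iso2 n m f f'"
  then obtain T T' where T: "is_2mor n m f f' T" "is_2mor n m f' f T'"
    "\<forall>i<m. \<forall>j<n. vcomp T' T i j = id2 f i j \<and> vcomp T T' i j = id2 f' i j"
    unfolding iso2_def invertible_2mor_def by blast
  show "\<forall>i<m. \<forall>j<n. fst f $$ (i,j) = fst f' $$ (i,j)"
  proof (intro allI impI)
    fix i j assume ij: "i < m" "j < n"
    show "fst f $$ (i,j) = fst f' $$ (i,j)"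
      apply (rule inv_dims_eq[of "T' i j" _ _ "T i j"])
      using T ij unfolding is_2mor_def vcomp_def id2_def by auto
  qed
next
  assume H: "\<forall>i<m. \<forall>j<n. fst f $$ (i,j) = fst f' $$ (i,j)"
  have "invertible_2mor n m f f' (id2 f)"
    unfolding invertible_2mor_def is_2mor_def
    apply (intro conjI exI[of _ "id2 f"])
    using H by (auto simp: id2_def vcomp_def)
  then show "iso2 n m f f'" unfolding iso2_def by blast
qed

lemma twomor_inv:
  assumes "is_2mor n m (R, s) (R, s'') T"
  shows "invertible_2mor n m (R, s) (R, s'') T \<longleftrightarrow>
           (\<forall>i<m. \<forall>j<n. R $$ (i,j) \<noteq> 0 \<longrightarrow> invertible_mat (T i j))"
proof
  assume "invertible_2mor n m (R, s) (R, s'') T"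
  then obtain T' where T: "is_2mor n m (R,s'') (R,s) T'"
    "\<forall>i<m. \<forall>j<n. vcomp T' T i j = id2 (R,s) i j \<and> vcomp T T' i j = id2 (R,s'') i j"
    unfolding invertible_2mor_def by blast
  show "\<forall>i<m. \<forall>j<n. R $$ (i,j) \<noteq> 0 \<longrightarrow> invertible_mat (T i j)"
  proof (intro allI impI)
    fix i j assume ij: "i < m" "j < n" "R $$ (i,j) \<noteq> 0"
    have c: "T i j \<in> carrier_mat (R $$ (i,j)) (R $$ (i,j))" using assms ij unfolding is_2mor_def by auto
    have c': "T' i j \<in> carrier_mat (R $$ (i,j)) (R $$ (i,j))" using T ij unfolding is_2mor_def by auto
    have e: "T' i j * T i j = 1\<^sub>m (R $$ (i, j))" "T i j * T' i j = 1\<^sub>m (R $$ (i, j))"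
      using T ij unfolding vcomp_def id2_def by auto
    show "invertible_mat (T i j)"
      unfolding invertible_mat_def inverts_mat_def
      apply (intro conjI exI[of _ "T' i j"])
      using c c' e by auto
  qed
next
  assume H: "\<forall>i<m. \<forall>j<n. R $$ (i,j) \<noteq> 0 \<longrightarrow> invertible_mat (T i j)"
  define T' where "T' = (\<lambda>i j. SOME B. B \<in> carrier_mat (R $$ (i,j)) (R $$ (i,j)) \<and>
      T i j * B = 1\<^sub>m (R $$ (i,j)) \<and> B * T i j = 1\<^sub>m (R $$ (i,j)))"
  have ex: "\<exists>B. B \<in> carrier_mat (R $$ (i,j)) (R $$ (i,j)) \<and>
      T i j * B = 1\<^sub>m (R $$ (i,j)) \<and> B * T i j = 1\<^sub>m (R $$ (i,j))" if ij: "i < m" "j < n" for i j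
  proof (cases "R $$ (i,j) = 0")
    case True
    have c: "T i j \<in> carrier_mat 0 0" using assms ij True unfolding is_2mor_def by (metis fst_conv)
    show ?thesis using True c by (intro exI[of _ "T i j"]) (auto intro!: eq_matI)
  next
    case False
    have c: "T i j \<in> carrier_mat (R $$ (i,j)) (R $$ (i,j))" using assms ij unfolding is_2mor_def by auto
    obtain B where B: "T i j * B = 1\<^sub>m (dim_row (T i j))" "B * T i j = 1\<^sub>m (dim_row B)"
      using H ij False unfolding invertible_mat_def inverts_mat_def by blast
    have "dim_row B = R $$ (i,j)" using B(2) c
      by (metis carrier_matD(2) index_mult_mat(3) index_one_mat(3))
    moreover have "dim_col B = R $$ (i,j)" using B(1) c
      by (metis carrier_matD(1) index_mult_mat(3) index_one_mat(3))
    ultimately show ?thesis using B c by (intro exI[of _ B]) auto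
  qed
  have T': "T' i j \<in> carrier_mat (R $$ (i,j)) (R $$ (i,j)) \<and>
      T i j * T' i j = 1\<^sub>m (R $$ (i,j)) \<and> T' i j * T i j = 1\<^sub>m (R $$ (i,j))" if "i < m" "j < n" for i j
    unfolding T'_def by (rule someI_ex[OF ex[OF that]])
  show "invertible_2mor n m (R, s) (R, s'') T"
    unfolding invertible_2mor_def
    apply (intro conjI assms exI[of _ T'])
    using T' by (auto simp: is_2mor_def vcomp_def id2_def)
qed



lemma nat_prod_le1:
  assumes "(x::nat) * y \<le> 1" "x \<noteq> 0" "y \<noteq> 0"
  shows "y = 1"
proof -
  have "y \<le> x * y" using assms(2) by simp
  then show ?thesis using assms by linarith
qed

lemma nat_inv_col:
  fixes A B :: "nat mat"
  assumes A: "A \<in> carrier_mat p q" and B: "B \<in> carrier_mat q p"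
    and BA: "B * A = 1\<^sub>m q" and AB: "A * B = 1\<^sub>m p"
  shows "\<exists>\<sigma>. inj_on \<sigma> {..<q} \<and> \<sigma> ` {..<q} \<subseteq> {..<p} \<and>
     (\<forall>l<q. \<forall>i<p. A $$ (i,l) = (if i = \<sigma> l then 1 else 0))"
proof -
  have ba: "(\<Sum>i<p. B $$ (j,i) * A $$ (i,l)) = (if j = l then 1 else 0)" if "j < q" "l < q" for j l
  proof -
    have "(B * A) $$ (j,l) = (\<Sum>i<p. B $$ (j,i) * A $$ (i,l))"
      using A B that by (simp add: scalar_prod_def row_def col_def atLeast0LessThan)
    then show ?thesis using BA that by simp
  qed
  have ab: "(\<Sum>k<q. A $$ (i,k) * B $$ (k,i')) = (if i = i' then 1 else 0)" if "i < p" "i' < p" for i i'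
  proof -
    have "(A * B) $$ (i,i') = (\<Sum>k<q. A $$ (i,k) * B $$ (k,i'))"
      using A B that by (simp add: scalar_prod_def row_def col_def atLeast0LessThan)
    then show ?thesis using AB that by simp
  qed
  define \<sigma> where "\<sigma> l = (SOME i. i < p \<and> B $$ (l,i) \<noteq> 0 \<and> A $$ (i,l) \<noteq> 0)" for l
  have ex: "\<exists>i. i < p \<and> B $$ (l,i) \<noteq> 0 \<and> A $$ (i,l) \<noteq> 0" if "l < q" for l
  proof (rule ccontr)
    assume "\<not> ?thesis"
    then have "(\<Sum>i<p. B $$ (l,i) * A $$ (i,l)) = 0" by auto
    then show False using ba[OF that that] by simp
  qed
  have sig: "\<sigma> l < p \<and> B $$ (l,\<sigma> l) \<noteq> 0 \<and> A $$ (\<sigma> l,l) \<noteq> 0" if "l < q" for l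
    unfolding \<sigma>_def by (rule someI_ex[OF ex[OF that]])
  have uniq: "i' = \<sigma> l" if l: "l < q" and i': "i' < p" "A $$ (i',l) \<noteq> 0" for l i'
  proof -
    have z: "B $$ (k,i') = 0" if "k < q" "k \<noteq> l" for k
    proof -
      have "(\<Sum>i<p. B $$ (k,i) * A $$ (i,l)) = 0" using ba[OF that(1) l] that by simp
      then show ?thesis using i' by fastforce
    qed
    have "B $$ (l,i') \<noteq> 0"
    proof
      assume "B $$ (l,i') = 0"
      then have "\<forall>k<q. B $$ (k,i') = 0" using z by metis
      then have "(\<Sum>k<q. A $$ (i',k) * B $$ (k,i')) = 0" by simp
      then show False using ab[OF i'(1) i'(1)] by simp
    qed
    then have "A $$ (\<sigma> l, l) * B $$ (l,i') \<noteq> 0" using sig[OF l] by simp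
    then have "(\<Sum>k<q. A $$ (\<sigma> l,k) * B $$ (k,i')) \<noteq> 0" using l by auto
    then show ?thesis using ab[of "\<sigma> l" i'] sig[OF l] i' by (auto split: if_splits)
  qed
  have inj: "inj_on \<sigma> {..<q}"
  proof (rule inj_onI)
    fix l l' assume l: "l \<in> {..<q}" "l' \<in> {..<q}" "\<sigma> l = \<sigma> l'"
    then have "B $$ (l,\<sigma> l) * A $$ (\<sigma> l,l') \<noteq> 0" using sig[of l] sig[of l'] by simp
    then have "(\<Sum>i<p. B $$ (l,i) * A $$ (i,l')) \<noteq> 0" using l sig[of l] by auto
    moreover have "l \<noteq> l' \<Longrightarrow> (\<Sum>i<p. B $$ (l,i) * A $$ (i,l')) = 0" using ba[of l l'] l by simp
    ultimately show "l = l'" by (metis (mono_tags))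
  qed
  have one: "A $$ (\<sigma> l, l) = 1" if l: "l < q" for l
  proof -
    have "B $$ (l,\<sigma> l) * A $$ (\<sigma> l,l) \<le> (\<Sum>i<p. B $$ (l,i) * A $$ (i,l))"
      by (rule member_le_sum) (use sig[OF l] in auto)
    then have "B $$ (l,\<sigma> l) * A $$ (\<sigma> l,l) \<le> 1" using ba[OF l l] by simp
    then show ?thesis using sig[OF l] nat_prod_le1 by blast
  qed
  have c3: "\<forall>l<q. \<forall>i<p. A $$ (i,l) = (if i = \<sigma> l then 1 else 0)"
  proof (intro allI impI)
    fix l i assume li: "l < q" "i < p"
    show "A $$ (i,l) = (if i = \<sigma> l then 1 else 0)"
    proof (cases "i = \<sigma> l")
      case True then show ?thesis using one li by simp
    next
      case False then show ?thesis using uniq[OF li(1) li(2)] by auto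
    qed
  qed
  have "\<sigma> ` {..<q} \<subseteq> {..<p}" using sig by auto
  then show ?thesis using c3 inj by blast
qed

lemma nat_inv_perm:
  fixes R Rg :: "nat mat"
  assumes R: "R \<in> carrier_mat m n" and Rg: "Rg \<in> carrier_mat n m"
    and e1: "Rg * R = 1\<^sub>m n" and e2: "R * Rg = 1\<^sub>m m"
  shows "n = m \<and> perm_mat n R"
proof -
  obtain \<sigma> where s: "inj_on \<sigma> {..<n}" "\<sigma> ` {..<n} \<subseteq> {..<m}"
     "\<forall>l<n. \<forall>i<m. R $$ (i,l) = (if i = \<sigma> l then 1 else 0)"
    using nat_inv_col[OF R Rg e1 e2] by blast
  obtain \<tau> where t: "inj_on \<tau> {..<m}" "\<tau> ` {..<m} \<subseteq> {..<n}"
    using nat_inv_col[OF Rg R e2 e1] by blast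
  have "n \<le> m" using card_inj_on_le[OF s(1,2)] by simp
  moreover have "m \<le> n" using card_inj_on_le[OF t(1,2)] by simp
  ultimately have nm: "n = m" by simp
  define \<sigma>' where "\<sigma>' l = (if l < n then \<sigma> l else l)" for l
  have inj': "inj_on \<sigma>' {..<n}" using s(1) unfolding \<sigma>'_def inj_on_def by auto
  have img': "\<sigma>' ` {..<n} \<subseteq> {..<n}" using s(2) nm unfolding \<sigma>'_def by auto
  have "\<sigma>' ` {..<n} = {..<n}" by (rule endo_inj_surj[OF _ img' inj']) simp
  then have "bij_betw \<sigma>' {..<n} {..<n}" using inj' by (simp add: bij_betw_def)
  then have perm: "\<sigma>' permutes {..<n}" by (rule bij_imp_permutes) (simp add: \<sigma>'_def)
  then have pinv: "inv_into UNIV \<sigma>' permutes {..<n}" by (rule permutes_inv)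
  have "R = mat n n (\<lambda>(i,j). if j = inv_into UNIV \<sigma>' i then 1 else 0)"
  proof (rule eq_matI)
    fix i j assume ij: "i < dim_row (mat n n (\<lambda>(i,j). if j = inv_into UNIV \<sigma>' i then (1::nat) else 0))"
      "j < dim_col (mat n n (\<lambda>(i,j). if j = inv_into UNIV \<sigma>' i then (1::nat) else 0))"
    then have ij': "i < n" "j < n" by auto
    have "(j = inv_into UNIV \<sigma>' i) = (\<sigma>' j = i)" using permutes_inv_eq[OF perm] by metis
    also have "\<dots> = (i = \<sigma> j)" using ij' unfolding \<sigma>'_def by auto
    finally show "R $$ (i,j) = mat n n (\<lambda>(i,j). if j = inv_into UNIV \<sigma>' i then 1 else 0) $$ (i,j)"
      using s(3) ij' nm by auto
  qed (use R nm in auto)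
  then show ?thesis using nm pinv unfolding perm_mat_def by blast
qed



definition pm :: "(nat \<Rightarrow> nat) \<Rightarrow> nat \<Rightarrow> nat mat" where
  "pm p n = mat n n (\<lambda>(i,j). if j = p i then 1 else 0)"

lemma pm_carrier[simp]: "pm p n \<in> carrier_mat n n" "dim_row (pm p n) = n" "dim_col (pm p n) = n"
  by (auto simp: pm_def)

lemma pm_index[simp]: "i < n \<Longrightarrow> j < n \<Longrightarrow> pm p n $$ (i,j) = (if j = p i then 1 else 0)"
  by (simp add: pm_def)

lemma sum_if_eq: "j < (n::nat) \<Longrightarrow> (\<Sum>i<n. (if i = j then 1 else 0) * (f i :: 'a::semiring_1)) = f j"
proof -
  assume j: "j < n"
  have "(\<Sum>i<n. (if i = j then 1 else 0) * f i) = (\<Sum>i<n. if i = j then f i else 0)"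
    by (rule sum.cong) auto
  also have "\<dots> = f j" using j by simp
  finally show ?thesis .
qed

lemma pm_mult_vec:
  assumes p: "p permutes {..<n}" and a: "a \<in> carrier_vec n"
  shows "pm p n *\<^sub>v a = vec n (\<lambda>i. a $ p i)"
proof (rule eq_vecI)
  fix i assume "i < dim_vec (vec n (\<lambda>i. a $ p i))"
  then have i: "i < n" by simp
  have pi: "p i < n" using permutes_in_image[OF p] i by simp
  have "(pm p n *\<^sub>v a) $ i = (\<Sum>j<n. (if j = p i then 1 else 0) * a $ j)"
    using i a by (simp add: scalar_prod_def row_def atLeast0LessThan)
  also have "\<dots> = a $ p i" by (rule sum_if_eq[OF pi])
  finally show "(pm p n *\<^sub>v a) $ i = vec n (\<lambda>i. a $ p i) $ i" using i by simp
qed simp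

lemma pm_unit:
  assumes p: "p permutes {..<n}" and q: "\<And>x. p (q x) = x" "\<And>x. q (p x) = x" and j: "j < n"
  shows "pm p n *\<^sub>v unit_vec n j = unit_vec n (q j)"
proof -
  have qj: "q j < n" using permutes_in_image[OF p, of "q j"] q j by simp
  show ?thesis
    unfolding pm_mult_vec[OF p unit_vec_carrier]
  proof (rule eq_vecI)
    fix i assume "i < dim_vec (unit_vec n (q j) :: nat vec)"
    then have i: "i < n" by simp
    have pi: "p i < n" using permutes_in_image[OF p] i by simp
    have "(p i = j) = (i = q j)" using q by metis
    then show "vec n (\<lambda>i. unit_vec n j $ p i) $ i = unit_vec n (q j) $ i"
      using i pi j qj by simp
  qed simp
qed

lemma pm_mult:
  assumes p: "p permutes {..<n}" and q: "q permutes {..<n}"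
  shows "pm p n * pm q n = pm (q \<circ> p) n"
proof (rule eq_matI)
  fix i j assume "i < dim_row (pm (q \<circ> p) n)" "j < dim_col (pm (q \<circ> p) n)"
  then have ij: "i < n" "j < n" by auto
  have pi: "p i < n" using permutes_in_image[OF p] ij by simp
  have "(pm p n * pm q n) $$ (i,j) = (\<Sum>k<n. (if k = p i then 1 else 0) * pm q n $$ (k,j))"
    using ij by (simp add: scalar_prod_def row_def col_def atLeast0LessThan)
  also have "\<dots> = pm q n $$ (p i, j)" by (rule sum_if_eq[OF pi])
  finally show "(pm p n * pm q n) $$ (i,j) = pm (q \<circ> p) n $$ (i,j)" using ij pi by simp
qed auto

lemma pm_id: "pm id n = 1\<^sub>m n"
  by (rule eq_matI) (auto simp: pm_def)

lemma pm_row: "k < n \<Longrightarrow> p k < n \<Longrightarrow> row (pm p n) k = unit_vec n (p k)"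
  by (rule eq_vecI) (auto simp: pm_def)

lemma kron_one0: "kron (1\<^sub>m 0) X \<in> carrier_mat 0 0"
  by (simp add: kron_def)

lemma kron_one1: "kron (1\<^sub>m 1) (X :: 'a::semiring_1 mat) = X"
  by (rule eq_matI) (auto simp: kron_def)

lemma kron_one1': "kron (1\<^sub>m (Suc 0)) (X :: 'a::semiring_1 mat) = X"
  using kron_one1 by simp

lemma dsum_left0: "A \<in> carrier_mat 0 0 \<Longrightarrow> dsum A B = B"
  by (rule eq_matI) (auto simp: dsum_def)

lemma dsum_right0: "B \<in> carrier_mat 0 0 \<Longrightarrow> dsum A B = A"
  by (rule eq_matI) (auto simp: dsum_def)

lemma dsum_list_all0: "(\<And>x. x \<in> set xs \<Longrightarrow> f x \<in> carrier_mat 0 0) \<Longrightarrow> dsum_list (map f xs) \<in> carrier_mat 0 0"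
  by (induction xs) (auto simp: dsum_list_def dsum_left0)

lemma dsum_list_single:
  assumes "distinct xs" "i0 \<in> set xs" "\<And>x. x \<in> set xs \<Longrightarrow> x \<noteq> i0 \<Longrightarrow> f x \<in> carrier_mat 0 0"
  shows "dsum_list (map f xs) = f i0"
  using assms
proof (induction xs)
  case Nil then show ?case by simp
next
  case (Cons x xs)
  show ?case
  proof (cases "x = i0")
    case True
    have "dsum_list (map f xs) \<in> carrier_mat 0 0"
      using Cons.prems True by (intro dsum_list_all0) auto
    then show ?thesis using True by (simp add: dsum_list_def dsum_right0)
  next
    case False
    then have "dsum_list (map f xs) = f i0" using Cons by auto
    moreover have "f x \<in> carrier_mat 0 0" using Cons.prems False by auto
    ultimately show ?thesis by (simp add: dsum_list_def dsum_left0)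
  qed
qed

lemma minv_props:
  assumes A: "A \<in> carrier_mat k k" and inv: "invertible_mat A"
  shows "minv A \<in> carrier_mat k k \<and> A * minv A = 1\<^sub>m k \<and> minv A * A = 1\<^sub>m k"
proof -
  obtain B where B: "A * B = 1\<^sub>m (dim_row A)" "B * A = 1\<^sub>m (dim_row B)"
    using inv unfolding invertible_mat_def inverts_mat_def by blast
  have r: "dim_row B = k" using B(2) A
    by (metis carrier_matD(2) index_mult_mat(3) index_one_mat(3))
  have c: "dim_col B = k" using B(1) A
    by (metis carrier_matD(1) index_mult_mat(3) index_one_mat(3))
  have ex: "\<exists>B. B \<in> carrier_mat (dim_row A) (dim_row A) \<and> inverts_mat A B \<and> inverts_mat B A"
    using B r c A by (intro exI[of _ B]) (auto simp: inverts_mat_def)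
  have "minv A \<in> carrier_mat (dim_row A) (dim_row A) \<and> inverts_mat A (minv A) \<and> inverts_mat (minv A) A"
    unfolding minv_def by (rule someI_ex[OF ex])
  then show ?thesis using A by (auto simp: inverts_mat_def)
qed

lemma minv_invertible:
  assumes A: "A \<in> carrier_mat k k" and inv: "invertible_mat A"
  shows "invertible_mat (minv A)"
proof -
  have m: "minv A \<in> carrier_mat k k" "A * minv A = 1\<^sub>m k" "minv A * A = 1\<^sub>m k"
    using minv_props[OF assms] by auto
  show ?thesis unfolding invertible_mat_def inverts_mat_def
    using m A by (intro conjI exI[of _ A]) (auto simp: square_mat.simps)
qed

lemma minv_one: "minv (1\<^sub>m k) = 1\<^sub>m k"
proof -
  have inv: "invertible_mat (1\<^sub>m k :: complex mat)"
    unfolding invertible_mat_def inverts_mat_def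
    by (intro conjI exI[of _ "1\<^sub>m k"]) (auto simp: square_mat.simps)
  have m: "minv (1\<^sub>m k) \<in> carrier_mat k k" "1\<^sub>m k * minv (1\<^sub>m k) = 1\<^sub>m k"
    using minv_props[OF one_carrier_mat inv] by auto
  then show ?thesis by simp
qed



lemma perm_lt: "p permutes {..<n} \<Longrightarrow> i < n \<Longrightarrow> p i < n"
  using permutes_in_image by fastforce

lemma comp_perm_gauge:
  assumes P: "admissible_P P" and p1: "p1 permutes {..<n}" and p2: "p2 permutes {..<n}"
    and inv12: "\<And>x. p1 (p2 x) = x" and inv21: "\<And>x. p2 (p1 x) = x"
    and f: "is_1mor n n (pm p1 n, s)" and g: "is_1mor n n (pm p2 n, t)"
    and k: "k < n" and a: "a \<in> carrier_vec n"
  shows "snd (comp1 P (pm p2 n, t) (pm p1 n, s)) k a = t k (pm p1 n *\<^sub>v a) * s (p2 k) a"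
proof -
  have p2k: "p2 k < n" using perm_lt[OF p2 k] .
  have ak: "(pm p1 n *\<^sub>v a) $ p2 k = a $ k"
    using pm_mult_vec[OF p1 a] p2k inv12 by simp
  have pa: "pm p1 n *\<^sub>v a \<in> carrier_vec n" by (rule mult_mat_vec_carrier[OF pm_carrier(1) a])
  have ak2: "(pm p2 n *\<^sub>v (pm p1 n *\<^sub>v a)) $ k = a $ k"
    using pm_mult_vec[OF p2 pa] k ak by simp
  have f1: "\<forall>i<n. \<forall>a\<in>carrier_vec n. s i a \<in> carrier_mat ((pm p1 n *\<^sub>v a) $ i) ((pm p1 n *\<^sub>v a) $ i)"
    using f unfolding is_1mor_def by simp
  have g1: "\<forall>i<n. \<forall>a\<in>carrier_vec n. t i a \<in> carrier_mat ((pm p2 n *\<^sub>v a) $ i) ((pm p2 n *\<^sub>v a) $ i)"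
    using g unfolding is_1mor_def by simp
  have g2: "\<forall>i<n. \<forall>j<n. t i (unit_vec n j) = 1\<^sub>m (pm p2 n $$ (i,j))"
    using g unfolding is_1mor_def by simp
  have sc: "s (p2 k) a \<in> carrier_mat (a $ k) (a $ k)"
    using f1 p2k a ak by metis
  have tc: "t k (pm p1 n *\<^sub>v a) \<in> carrier_mat (a $ k) (a $ k)"
    using g1 k pa ak2 by metis
  have D1: "dsum_list (map (\<lambda>i. kron (1\<^sub>m (pm p2 n $$ (k,i))) (s i a)) [0..<n]) = s (p2 k) a"
  proof -
    have "dsum_list (map (\<lambda>i. kron (1\<^sub>m (pm p2 n $$ (k,i))) (s i a)) [0..<n])
        = kron (1\<^sub>m (pm p2 n $$ (k,p2 k))) (s (p2 k) a)"
      by (rule dsum_list_single) (use p2k k in \<open>auto intro: kron_one0\<close>)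
    also have "\<dots> = s (p2 k) a" using k p2k by (simp add: kron_one1 kron_one1')
    finally show ?thesis .
  qed
  have tn: "t k (unit_vec n i) = 1\<^sub>m (pm p2 n $$ (k,i))" if "i < n" for i
    using g2 k that by blast
  have D2: "dsum_list (map (\<lambda>j. kron (minv (t k (pm p1 n *\<^sub>v unit_vec n j))) (1\<^sub>m (a $ j))) [0..<n])
      = 1\<^sub>m (a $ k)"
  proof -
    have e: "minv (t k (pm p1 n *\<^sub>v unit_vec n j)) = 1\<^sub>m (if j = k then 1 else 0)" if j: "j < n" for j
    proof -
      have "pm p1 n *\<^sub>v unit_vec n j = unit_vec n (p2 j)" by (rule pm_unit[OF p1 inv12 inv21 j])
      moreover have "p2 j < n" using perm_lt[OF p2 j] .
      moreover have "(p2 j = p2 k) = (j = k)" using inv12 by metis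
      ultimately show ?thesis using tn k by (simp add: minv_one)
    qed
    have "dsum_list (map (\<lambda>j. kron (minv (t k (pm p1 n *\<^sub>v unit_vec n j))) (1\<^sub>m (a $ j))) [0..<n])
        = kron (minv (t k (pm p1 n *\<^sub>v unit_vec n k))) (1\<^sub>m (a $ k))"
      by (rule dsum_list_single) (use k e in \<open>auto intro: kron_one0\<close>)
    also have "\<dots> = 1\<^sub>m (a $ k)" using e[OF k] by (simp add: kron_one1 kron_one1')
    finally show ?thesis .
  qed
  have rowk: "row (pm p2 n) k = unit_vec n (p2 k)" by (rule pm_row[of k n p2, OF k p2k])
  let ?N = "\<Sum>i<n. \<Sum>j<n. unit_vec n (p2 k) $ i * pm p1 n $$ (i,j) * a $ j"
  have PN: "P (unit_vec n (p2 k)) (pm p1 n) a = 1\<^sub>m ?N"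
  proof -
    note H0 = P[unfolded admissible_P_def]
    note H = H0[THEN spec[of _ n], THEN spec[of _ n], THEN spec[of _ "unit_vec n (p2 k)"],
      THEN spec[of _ "pm p1 n"], THEN spec[of _ a]]
    have c: "\<exists>i<n. unit_vec n (p2 k) = (unit_vec n i :: nat vec)" using p2k by blast
    show ?thesis using H a c unfolding Let_def by (simp add: unit_vec_carrier)
  qed
  have N: "?N = a $ k"
  proof -
    have inner: "(\<Sum>j<n. unit_vec n (p2 k) $ i * pm p1 n $$ (i,j) * a $ j)
        = (if i = p2 k then a $ p1 i else 0)" if i: "i < n" for i
    proof -
      have "(\<Sum>j<n. unit_vec n (p2 k) $ i * pm p1 n $$ (i,j) * a $ j)
          = (\<Sum>j<n. (if i = p2 k then 1 else 0) * ((if j = p1 i then 1 else 0) * a $ j))"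
        by (rule sum.cong) (use i p2k in auto)
      also have "\<dots> = (if i = p2 k then 1 else 0) * (\<Sum>j<n. (if j = p1 i then 1 else 0) * a $ j)"
        by (simp add: sum_distrib_left)
      also have "\<dots> = (if i = p2 k then 1 else 0) * a $ p1 i"
        using sum_if_eq[OF perm_lt[OF p1 i], of "\<lambda>j. a $ j"] by simp
      finally show ?thesis by simp
    qed
    have "?N = (\<Sum>i<n. (if i = p2 k then 1 else 0) * a $ p1 i)"
      by (rule sum.cong) (use inner in auto)
    also have "\<dots> = a $ p1 (p2 k)" by (rule sum_if_eq[OF p2k])
    finally show ?thesis using inv12 by simp
  qed
  show ?thesis
    unfolding comp1_def using D1 D2 PN N rowk sc tc by simp
qed


lemma pm_inv_vec:
  assumes p: "p permutes {..<n}" and q: "q permutes {..<n}" and pq: "\<And>x. q (p x) = x"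
    and a: "a \<in> carrier_vec n"
  shows "pm p n *\<^sub>v (pm q n *\<^sub>v a) = a"
proof -
  have "q \<circ> p = id" using pq by auto
  then have "pm p n * pm q n = 1\<^sub>m n" using pm_mult[OF p q] pm_id by simp
  then have "(pm p n * pm q n) *\<^sub>v a = a" using a by simp
  then show ?thesis using a by (simp add: assoc_mult_mat_vec[of _ n n _ n])
qed

lemma perm_invertible:
  assumes P: "admissible_P P" and pr: "perm_mat n R" and f: "is_1mor n n (R, s)"
  shows "invertible_1mor P n n (R, s)"
proof -
  obtain p where p: "p permutes {..<n}" and R: "R = pm p n" using pr unfolding perm_mat_def pm_def by blast
  define q where "q = inv_into UNIV p"
  have q: "q permutes {..<n}" using permutes_inv[OF p] q_def by simp
  have pq: "\<And>x. p (q x) = x" "\<And>x. q (p x) = x" using permutes_inverses[OF p] q_def by auto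
  define st where "st k b = minv (s (q k) (pm q n *\<^sub>v b))" for k b
  have f': "is_1mor n n (pm p n, s)" using f R by simp
  have f1: "\<forall>i<n. \<forall>a\<in>carrier_vec n. s i a \<in> carrier_mat ((pm p n *\<^sub>v a) $ i) ((pm p n *\<^sub>v a) $ i) \<and> invertible_mat (s i a)"
    using f' unfolding is_1mor_def by simp
  have f2: "\<forall>i<n. \<forall>j<n. s i (unit_vec n j) = 1\<^sub>m (pm p n $$ (i,j))"
    using f' unfolding is_1mor_def by simp
  have sX: "s (q i) (pm q n *\<^sub>v b) \<in> carrier_mat ((pm q n *\<^sub>v b) $ i) ((pm q n *\<^sub>v b) $ i)
       \<and> invertible_mat (s (q i) (pm q n *\<^sub>v b))" if i: "i < n" and b: "b \<in> carrier_vec n" for i b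
  proof -
    have c: "pm q n *\<^sub>v b \<in> carrier_vec n" by (rule mult_mat_vec_carrier[OF pm_carrier(1) b])
    have qi: "q i < n" by (rule perm_lt[OF q i])
    have "(pm p n *\<^sub>v (pm q n *\<^sub>v b)) $ q i = (pm q n *\<^sub>v b) $ i"
      using pm_mult_vec[OF p c] qi pq by simp
    then show ?thesis using f1 qi c by metis
  qed
  have stc: "\<forall>i<n. \<forall>b\<in>carrier_vec n. st i b \<in> carrier_mat ((pm q n *\<^sub>v b) $ i) ((pm q n *\<^sub>v b) $ i)
      \<and> invertible_mat (st i b)"
  proof (intro allI impI ballI)
    fix i and b :: "nat vec" assume i: "i < n" and b: "b \<in> carrier_vec n"
    show "st i b \<in> carrier_mat ((pm q n *\<^sub>v b) $ i) ((pm q n *\<^sub>v b) $ i) \<and> invertible_mat (st i b)"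
      unfolding st_def using sX[OF i b] minv_props minv_invertible by blast
  qed
  have stn: "\<forall>i<n. \<forall>j<n. st i (unit_vec n j) = 1\<^sub>m (pm q n $$ (i,j))"
  proof (intro allI impI)
    fix i j assume i: "i < n" and j: "j < n"
    have u: "pm q n *\<^sub>v unit_vec n j = unit_vec n (p j)" by (rule pm_unit[OF q pq(2) pq(1) j])
    have pj: "p j < n" by (rule perm_lt[OF p j])
    have qi: "q i < n" by (rule perm_lt[OF q i])
    have "(p j = p (q i)) = (j = q i)" using pq by metis
    then show "st i (unit_vec n j) = 1\<^sub>m (pm q n $$ (i,j))"
      unfolding st_def u using f2 pj qi i j by (simp add: minv_one)
  qed
  have g: "is_1mor n n (pm q n, st)" unfolding is_1mor_def using stc stn by simp
  have e1: "mor_eq n n (comp1 P (pm q n, st) (pm p n, s)) (id1 n)"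
    unfolding mor_eq_def
  proof (intro conjI allI impI ballI)
    have "p \<circ> q = id" using pq by auto
    then show "fst (comp1 P (pm q n, st) (pm p n, s)) = fst (id1 n)"
      using pm_mult[OF q p] pm_id by (simp add: comp1_def id1_def)
  next
    fix k and a :: "nat vec" assume k: "k < n" and a: "a \<in> carrier_vec n"
    have G: "snd (comp1 P (pm q n, st) (pm p n, s)) k a = st k (pm p n *\<^sub>v a) * s (q k) a"
      by (rule comp_perm_gauge[OF P p q pq(1) pq(2) f' g k a])
    have "pm q n *\<^sub>v (pm p n *\<^sub>v a) = a" by (rule pm_inv_vec[OF q p pq(1) a])
    then have st: "st k (pm p n *\<^sub>v a) = minv (s (q k) a)" by (simp add: st_def)
    have qk: "q k < n" by (rule perm_lt[OF q k])
    have "(pm p n *\<^sub>v a) $ q k = a $ k" using pm_mult_vec[OF p a] qk pq by simp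
    then have X: "s (q k) a \<in> carrier_mat (a $ k) (a $ k) \<and> invertible_mat (s (q k) a)"
      using f1 qk a by metis
    show "snd (comp1 P (pm q n, st) (pm p n, s)) k a = snd (id1 n) k a"
      unfolding G st using minv_props X by (simp add: id1_def)
  qed
  have e2: "mor_eq n n (comp1 P (pm p n, s) (pm q n, st)) (id1 n)"
    unfolding mor_eq_def
  proof (intro conjI allI impI ballI)
    have "q \<circ> p = id" using pq by auto
    then show "fst (comp1 P (pm p n, s) (pm q n, st)) = fst (id1 n)"
      using pm_mult[OF p q] pm_id by (simp add: comp1_def id1_def)
  next
    fix k and b :: "nat vec" assume k: "k < n" and b: "b \<in> carrier_vec n"
    have G: "snd (comp1 P (pm p n, s) (pm q n, st)) k b = s k (pm q n *\<^sub>v b) * st (p k) b"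
      by (rule comp_perm_gauge[OF P q p pq(2) pq(1) g f' k b])
    have st: "st (p k) b = minv (s k (pm q n *\<^sub>v b))" by (simp add: st_def pq)
    have c: "pm q n *\<^sub>v b \<in> carrier_vec n" by (rule mult_mat_vec_carrier[OF pm_carrier(1) b])
    have "(pm p n *\<^sub>v (pm q n *\<^sub>v b)) $ k = b $ k" using pm_inv_vec[OF p q pq(2) b] by simp
    then have X: "s k (pm q n *\<^sub>v b) \<in> carrier_mat (b $ k) (b $ k) \<and> invertible_mat (s k (pm q n *\<^sub>v b))"
      using f1 k c by metis
    show "snd (comp1 P (pm p n, s) (pm q n, st)) k b = snd (id1 n) k b"
      unfolding G st using minv_props X by (simp add: id1_def)
  qed
  show ?thesis unfolding invertible_1mor_def R using g e1 e2 by blast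
qed

lemma fst_comp1: "fst (comp1 P (Rg, sg) (R, s)) = Rg * R"
  by (simp add: comp1_def)

lemma inv_imp_perm:
  assumes R: "R \<in> carrier_mat m n" and g: "is_1mor m n g"
    and e1: "\<forall>i<n. \<forall>j<n. (fst g * R) $$ (i,j) = (1\<^sub>m n :: nat mat) $$ (i,j)"
    and e2: "\<forall>i<m. \<forall>j<m. (R * fst g) $$ (i,j) = (1\<^sub>m m :: nat mat) $$ (i,j)"
  shows "n = m \<and> perm_mat n R"
proof -
  have Rg: "fst g \<in> carrier_mat n m" using g unfolding is_1mor_def by (auto split: prod.splits)
  have "fst g * R = 1\<^sub>m n" by (rule eq_matI) (use e1 Rg R in auto)
  moreover have "R * fst g = 1\<^sub>m m" by (rule eq_matI) (use e2 Rg R in auto)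
  ultimately show ?thesis using nat_inv_perm[OF R Rg] by blast
qed

theorem mainTheorem5:
  fixes P :: "nat vec \<Rightarrow> nat mat \<Rightarrow> nat vec \<Rightarrow> complex mat"
    and n m :: nat and R R' :: "nat mat" and s s' :: "nat \<Rightarrow> nat vec \<Rightarrow> complex mat"
  assumes "admissible_P P" and "n \<ge> 1" and "m \<ge> 1"
    and "is_1mor n m (R, s)" and "is_1mor n m (R', s')"
  shows "(invertible_1mor P n m (R, s) \<longleftrightarrow> n = m \<and> perm_mat n R)
    \<and> (iso2 n m (R, s) (R', s') \<longleftrightarrow> R = R')
    \<and> (\<forall>s''. is_1mor n m (R, s'') \<longrightarrow> (\<forall>T. is_2mor n m (R, s) (R, s'') T \<longrightarrow>
          (invertible_2mor n m (R, s) (R, s'') T \<longleftrightarrow>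
           (\<forall>i<m. \<forall>j<n. R $$ (i,j) \<noteq> 0 \<longrightarrow> invertible_mat (T i j)))))
    \<and> (equivalence_1mor P n m (R, s) \<longleftrightarrow> invertible_1mor P n m (R, s))"
proof -
  have Rc: "R \<in> carrier_mat m n" using assms(4) unfolding is_1mor_def by simp
  have R'c: "R' \<in> carrier_mat m n" using assms(5) unfolding is_1mor_def by simp
  have I1: "invertible_1mor P n m (R, s) \<longleftrightarrow> n = m \<and> perm_mat n R"
  proof
    assume "invertible_1mor P n m (R, s)"
    then obtain g where g: "is_1mor m n g" "mor_eq n n (comp1 P g (R, s)) (id1 n)"
      "mor_eq m m (comp1 P (R, s) g) (id1 m)" unfolding invertible_1mor_def by blast
    obtain Rg sg where gg: "g = (Rg, sg)" by (cases g)
    show "n = m \<and> perm_mat n R"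
      by (rule inv_imp_perm[OF Rc g(1)]) (use g(2,3) in \<open>auto simp: gg mor_eq_def fst_comp1 id1_def\<close>)
  next
    assume "n = m \<and> perm_mat n R"
    then show "invertible_1mor P n m (R, s)" using perm_invertible[OF assms(1)] assms(4) by blast
  qed
  have I2: "iso2 n m (R, s) (R', s') \<longleftrightarrow> R = R'"
  proof -
    have "(\<forall>i<m. \<forall>j<n. R $$ (i,j) = R' $$ (i,j)) \<longleftrightarrow> R = R'"
    proof
      assume "\<forall>i<m. \<forall>j<n. R $$ (i,j) = R' $$ (i,j)"
      then show "R = R'" by (intro eq_matI) (use Rc R'c in auto)
    qed simp
    then show ?thesis using iso2_iff[of n m "(R,s)" "(R',s')"] by simp
  qed
  have I4: "equivalence_1mor P n m (R, s) \<longleftrightarrow> invertible_1mor P n m (R, s)"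
  proof
    assume "equivalence_1mor P n m (R, s)"
    then obtain g where g: "is_1mor m n g" "iso2 n n (comp1 P g (R, s)) (id1 n)"
      "iso2 m m (comp1 P (R, s) g) (id1 m)" unfolding equivalence_1mor_def by blast
    obtain Rg sg where gg: "g = (Rg, sg)" by (cases g)
    have "n = m \<and> perm_mat n R"
      by (rule inv_imp_perm[OF Rc g(1)]) (use g(2,3) in \<open>auto simp: gg iso2_iff fst_comp1 id1_def\<close>)
    then show "invertible_1mor P n m (R, s)" using I1 by blast
  next
    assume "invertible_1mor P n m (R, s)"
    then obtain g where g: "is_1mor m n g" "mor_eq n n (comp1 P g (R, s)) (id1 n)"
      "mor_eq m m (comp1 P (R, s) g) (id1 m)" unfolding invertible_1mor_def by blast
    have "iso2 n n (comp1 P g (R, s)) (id1 n)" "iso2 m m (comp1 P (R, s) g) (id1 m)"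
      using g(2,3) unfolding iso2_iff mor_eq_def by auto
    then show "equivalence_1mor P n m (R, s)" unfolding equivalence_1mor_def using g(1) by blast
  qed
  show ?thesis using I1 I2 I4 twomor_inv by blast
qed

end
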